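(* Let $(\mathcal L,f)$ be a Lagrangian pair with $\mathcal L$ Kählerian. If there is a point $q\in\mathcal L$ which is real ($\tau q=q$) and such that $f(q)\notin\mathbb{R}$, then there is an open neighborhood $U\subset\mathcal L$ of $q$ such that the Lagrangian cone $\mathrm{con}(U,f|_U)$ is Kählerian, i.e. the Hermitian form $\hat\gamma=\sqrt{-1}\,\hat\Omega(\cdot,\hat\tau\cdot)$ of $\mathbb{C}^{2n+2}$ restricts to a non-degenerate form on it.
   Context: $\mathbb{C}^{2n}$: coordinates $(z,w)$, $\Omega=\sum dz^i\wedge dw_i$, real structure $\tau$ (complex conjugation), $\gamma=\sqrt{-1}\Omega(\cdot,\tau\cdot)$, $\eta_q=\Omega(q,\cdot)$. A Lagrangian pair $(\mathcal L,f)$: complex Lagrangian submanifold $\mathcal L\subset\mathbb{C}^{2n}$, holomorphic $f$ with $df=-\eta|_{\mathcal L}$; $\mathcal L$ is Kählerian if $\gamma|_{\mathcal L}$ is non-degenerate. $\mathbb{C}^{2n+2}=\mathbb{C}^2\times\mathbb{C}^{2n}$ with coordinates $(z^0,w_0,z,w)$, $\hat\Omega=dz^0\wedge dw_0+\Omega$, real structure $\hat\tau$ (complex conjugation). $\mathrm{con}(\mathcal L,f):=\mathbb{C}^*\cdot\{(1,f(q),q)\mid q\in\mathcal L\}$. *)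

theory Defs
  imports "HOL-Analysis.Analysis"
begin

text \<open>Coordinates: a point of C^{2k} is a vector indexed by 'k + 'k;
  index Inl i is z^i, index Inr i is w_i.  C^{2n+2} uses the index type 'n option,
  where None is the extra coordinate (z^0, w_0).\<close>

definition Omega :: "complex^('k::finite + 'k) \<Rightarrow> complex^('k + 'k) \<Rightarrow> complex" where
  "Omega x y = (\<Sum>i\<in>UNIV. x$(Inl i) * y$(Inr i) - x$(Inr i) * y$(Inl i))"

definition tau :: "complex^('m::finite) \<Rightarrow> complex^'m" where
  "tau x = (\<chi> j. cnj (x$j))"

definition gamma :: "complex^('k::finite + 'k) \<Rightarrow> complex^('k + 'k) \<Rightarrow> complex" where
  "gamma x y = \<i> * Omega x (tau y)"

definition cchart ::
  "(complex^('m::finite)) set \<Rightarrow> (complex^'m) set \<Rightarrow> (complex^('d::finite)) set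
     \<Rightarrow> (complex^'d \<Rightarrow> complex^'m) \<Rightarrow> (complex^'d \<Rightarrow> complex^'d \<Rightarrow> complex^'m) \<Rightarrow> bool" where
  "cchart S W D \<phi> \<phi>' \<longleftrightarrow> open W \<and> open D \<and> \<phi> ` D = S \<inter> W \<and> inj_on \<phi> D \<and>
     continuous_on (S \<inter> W) (inv_into D \<phi>) \<and>
     (\<forall>d\<in>D. (\<phi> has_derivative \<phi>' d) (at d) \<and> inj (\<phi>' d) \<and>
        (\<forall>c h. \<phi>' d (c *s h) = c *s \<phi>' d h))"

text \<open>Embedded complex submanifold of complex dimension CARD('d).\<close>
definition csubmanifold :: "'d::finite itself \<Rightarrow> (complex^('m::finite)) set \<Rightarrow> bool" where
  "csubmanifold (_::'d itself) S \<longleftrightarrow>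
     (\<forall>p\<in>S. \<exists>W D (\<phi>::complex^'d \<Rightarrow> complex^'m) \<phi>'. p \<in> W \<and> cchart S W D \<phi> \<phi>')"

definition tangent_space :: "(complex^('m::finite)) set \<Rightarrow> complex^'m \<Rightarrow> (complex^'m) set" where
  "tangent_space S p = {v. \<exists>g e. 0 < e \<and> g 0 = p \<and> (\<forall>t. \<bar>t\<bar> < e \<longrightarrow> g t \<in> S) \<and>
                              (g has_vector_derivative v) (at (0::real))}"

definition nondegenerate_on :: "('v::zero \<Rightarrow> 'v \<Rightarrow> complex) \<Rightarrow> 'v set \<Rightarrow> bool" where
  "nondegenerate_on B T \<longleftrightarrow> (\<forall>v\<in>T. (\<forall>u\<in>T. B v u = 0) \<longrightarrow> v = 0)"

definition complex_lagrangian :: "(complex^('k::finite + 'k)) set \<Rightarrow> bool" where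
  "complex_lagrangian L \<longleftrightarrow> csubmanifold TYPE('k) L \<and>
     (\<forall>p\<in>L. \<forall>u\<in>tangent_space L p. \<forall>v\<in>tangent_space L p. Omega u v = 0)"

definition kaehlerian :: "(complex^('k::finite + 'k)) set \<Rightarrow> bool" where
  "kaehlerian L \<longleftrightarrow> (\<forall>p\<in>L. nondegenerate_on gamma (tangent_space L p))"

text \<open>Lagrangian pair: f holomorphic on L with df = - eta restricted to L,
  where eta_q = Omega(q, -). Expressed in every local holomorphic chart of L.\<close>
definition lagrangian_pair :: "(complex^('k::finite + 'k)) set \<Rightarrow> (complex^('k + 'k) \<Rightarrow> complex) \<Rightarrow> bool" where
  "lagrangian_pair L f \<longleftrightarrow> complex_lagrangian L \<and>
     (\<forall>W D (\<phi>::complex^'k \<Rightarrow> complex^('k+'k)) \<phi>'. cchart L W D \<phi> \<phi>' \<longrightarrow>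
        (\<forall>d\<in>D. ((f \<circ> \<phi>) has_derivative (\<lambda>h. - Omega (\<phi> d) (\<phi>' d h))) (at d)))"

definition lift :: "(complex^('k::finite + 'k) \<Rightarrow> complex) \<Rightarrow> complex^('k + 'k) \<Rightarrow> complex^('k option + 'k option)" where
  "lift f q = (\<chi> j. case j of Inl None \<Rightarrow> 1 | Inr None \<Rightarrow> f q
                             | Inl (Some i) \<Rightarrow> q$(Inl i) | Inr (Some i) \<Rightarrow> q$(Inr i))"

definition con :: "(complex^('k::finite + 'k)) set \<Rightarrow> (complex^('k + 'k) \<Rightarrow> complex) \<Rightarrow> (complex^('k option + 'k option)) set" where
  "con U f = {c *s lift f q | c q. c \<noteq> 0 \<and> q \<in> U}"

end

theory Submission
  imports Defs "HOL-Complex_Analysis.Cauchy_Integral_Formula"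
begin

lemma has_derivative_vecI:
  fixes f :: "'a::real_normed_vector \<Rightarrow> complex^'m::finite"
  assumes "\<And>j. ((\<lambda>x. f x $ j) has_derivative (\<lambda>h. f' h $ j)) (at x)"
  shows "(f has_derivative f') (at x)"
proof -
  have "\<forall>i\<in>Basis. ((\<lambda>x. f x \<bullet> i) has_derivative (\<lambda>h. f' h \<bullet> i)) (at x)"
  proof
    fix i :: "complex^'m" assume "i \<in> Basis"
    then obtain j b where i: "i = axis j b" "b \<in> Basis" by (auto simp: Basis_vec_def)
    have "((\<lambda>x. f x $ j \<bullet> b) has_derivative (\<lambda>h. f' h $ j \<bullet> b)) (at x)"
      by (rule has_derivative_inner_left[OF assms])
    then show "((\<lambda>x. f x \<bullet> i) has_derivative (\<lambda>h. f' h \<bullet> i)) (at x)"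
      by (simp add: i inner_axis)
  qed
  then show ?thesis using has_derivative_componentwise_within[of f f' x UNIV] by simp
qed

lemma Omega_add_left: "Omega (x + y) z = Omega x z + Omega y z"
  by (simp add: Omega_def algebra_simps sum.distrib sum_subtractf)
lemma Omega_add_right: "Omega z (x + y) = Omega z x + Omega z y"
  by (simp add: Omega_def algebra_simps sum.distrib sum_subtractf)
lemma Omega_scale_left: "Omega (c *s x) z = c * Omega x z"
  by (simp add: Omega_def algebra_simps sum_distrib_left sum_subtractf)
lemma Omega_scale_right: "Omega z (c *s x) = c * Omega z x"
  by (simp add: Omega_def algebra_simps sum_distrib_left sum_subtractf)
lemma Omega_antisym: "Omega x y = - Omega y x"
  by (simp add: Omega_def algebra_simps sum_subtractf)
lemma Omega_self[simp]: "Omega x x = 0"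
  by (simp add: Omega_def algebra_simps)
lemma Omega_zero[simp]: "Omega 0 x = 0" "Omega x 0 = 0"
  by (simp_all add: Omega_def)
lemma Omega_minus_left: "Omega (x - y) z = Omega x z - Omega y z"
  by (simp add: Omega_def algebra_simps sum.distrib sum_subtractf)
lemma Omega_minus_right: "Omega z (x - y) = Omega z x - Omega z y"
  by (simp add: Omega_def algebra_simps sum.distrib sum_subtractf)
lemma Omega_tau: "Omega (tau x) (tau y) = cnj (Omega x y)"
  by (simp add: Omega_def tau_def)
lemma tau_add: "tau (x + y) = tau x + tau y" by (simp add: tau_def vec_eq_iff)
lemma tau_scale: "tau (c *s x) = cnj c *s tau x" by (simp add: tau_def vec_eq_iff)
lemma tau_tau[simp]: "tau (tau x) = x" by (simp add: tau_def vec_eq_iff)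
lemma tau_zero[simp]: "tau 0 = 0" by (simp add: tau_def vec_eq_iff)
lemma Omega_sum_left: "finite A \<Longrightarrow> Omega (\<Sum>i\<in>A. g i) z = (\<Sum>i\<in>A. Omega (g i) z)"
  by (induction A rule: finite_induct) (auto simp: Omega_add_left)
lemma Omega_sum_right: "finite A \<Longrightarrow> Omega z (\<Sum>i\<in>A. g i) = (\<Sum>i\<in>A. Omega z (g i))"
  by (induction A rule: finite_induct) (auto simp: Omega_add_right)
lemma tau_sum: "finite A \<Longrightarrow> tau (\<Sum>i\<in>A. g i) = (\<Sum>i\<in>A. tau (g i))"
  by (induction A rule: finite_induct) (auto simp: tau_add)

definition mk :: "complex \<Rightarrow> complex \<Rightarrow> complex^('n::finite+'n) \<Rightarrow> complex^('n option + 'n option)" where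
  "mk a b v = (\<chi> j. case j of Inl None \<Rightarrow> a | Inr None \<Rightarrow> b | Inl (Some i) \<Rightarrow> v$Inl i | Inr (Some i) \<Rightarrow> v$Inr i)"

definition proj :: "complex^('n::finite option + 'n option) \<Rightarrow> complex^('n+'n)" where
  "proj x = (\<chi> j. case j of Inl i \<Rightarrow> x$Inl (Some i) | Inr i \<Rightarrow> x$Inr (Some i))"

lemma lift_mk: "lift f q = mk 1 (f q) q"
  by (simp add: lift_def mk_def)

lemma mk_nth[simp]: "mk a b v $ Inl None = a" "mk a b v $ Inr None = b"
  "mk a b v $ Inl (Some i) = v $ Inl i" "mk a b v $ Inr (Some i) = v $ Inr i"
  by (simp_all add: mk_def)

lemma proj_mk[simp]: "proj (mk a b v) = v"
  by (simp add: proj_def vec_eq_iff split: sum.split)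

lemma mk_eta: "mk (x$Inl None) (x$Inr None) (proj x) = x"
  by (simp add: vec_eq_iff mk_def proj_def split: sum.split option.split)

lemma mk_eq_iff: "mk a b v = mk a' b' v' \<longleftrightarrow> a = a' \<and> b = b' \<and> v = v'"
  by (metis mk_nth(1,2) proj_mk)

lemma mk_add: "mk a b v + mk a' b' v' = mk (a+a') (b+b') (v+v')"
  by (simp add: vec_eq_iff mk_def split: sum.split option.split)
lemma mk_diff: "mk a b v - mk a' b' v' = mk (a-a') (b-b') (v-v')"
  by (simp add: vec_eq_iff mk_def split: sum.split option.split)
lemma mk_scale: "c *s mk a b v = mk (c*a) (c*b) (c *s v)"
  by (simp add: vec_eq_iff mk_def split: sum.split option.split)
lemma mk_zero: "mk 0 0 0 = 0"
  by (simp add: vec_eq_iff mk_def split: sum.split option.split)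
lemma mk_scaleR: "r *\<^sub>R mk a b v = mk (r*\<^sub>Ra) (r*\<^sub>Rb) (r *\<^sub>R v)"
  by (simp add: vec_eq_iff mk_def split: sum.split option.split)
lemma tau_mk: "tau (mk a b v) = mk (cnj a) (cnj b) (tau v)"
  by (simp add: vec_eq_iff mk_def tau_def split: sum.split option.split)

lemma sum_option: "(\<Sum>i\<in>(UNIV::'a::finite option set). g i) = g None + (\<Sum>i\<in>UNIV. g (Some i))"
  by (simp add: UNIV_option_conv sum.reindex)

lemma Omega_mk: "Omega (mk a b v) (mk a' b' v') = a*b' - b*a' + Omega v v'"
  by (simp add: Omega_def sum_option)

lemma inv_deriv:
  fixes \<phi> :: "'a::real_normed_vector \<Rightarrow> 'b::real_normed_vector" and k :: "real \<Rightarrow> 'a"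
  assumes phid: "(\<phi> has_derivative \<phi>') (at (k 0))"
    and P: "bounded_linear P" and Pinv: "\<And>x. P (\<phi>' x) = x"
    and kc: "(k \<longlongrightarrow> k 0) (at 0)"
    and ev: "eventually (\<lambda>t. \<phi> (k t) = g t) (at 0)"
    and g0: "g 0 = \<phi> (k 0)"
    and gd: "(g has_derivative g') (at 0)"
  shows "(k has_derivative (\<lambda>t. P (g' t))) (at 0)"
proof -
  interpret P: bounded_linear P by fact
  interpret f': bounded_linear \<phi>' using phid by (simp add: has_derivative_def)
  interpret g': bounded_linear g' using gd by (simp add: has_derivative_def)
  obtain C where C: "C > 0" "\<And>x. norm (P x) \<le> norm x * C" using P.pos_bounded by blast
  obtain M where M: "M > 0" "\<And>x. norm (g' x) \<le> norm x * M" using g'.pos_bounded by blast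
  define R where "R t = \<phi> (k t) - \<phi> (k 0) - \<phi>' (k t - k 0)" for t
  have kdecomp: "k t - k 0 = P (g t - g 0) - P (R t)" if "\<phi> (k t) = g t" for t
    using that g0 by (simp add: R_def P.diff[symmetric] Pinv)
  have Rsmall: "eventually (\<lambda>t. norm (R t) \<le> e * norm (k t - k 0)) (at 0)" if "e > 0" for e
  proof -
    obtain d where d: "d > 0" "\<And>y. norm (y - k 0) < d \<Longrightarrow> norm (\<phi> y - \<phi> (k 0) - \<phi>' (y - k 0)) \<le> e * norm (y - k 0)"
      using phid[unfolded has_derivative_at_alt] \<open>e > 0\<close> by blast
    have "eventually (\<lambda>t. dist (k t) (k 0) < d) (at 0)"
      using kc d(1) by (rule tendstoD)
    then show ?thesis
      by eventually_elim (use d in \<open>auto simp: R_def dist_norm\<close>)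
  qed
  have gsmall: "eventually (\<lambda>t. norm (g t - g 0 - g' t) \<le> e * norm t) (at 0)" if "e > 0" for e
  proof -
    obtain d where d: "d > 0" "\<And>y. norm (y - 0) < d \<Longrightarrow> norm (g y - g 0 - g' (y - 0)) \<le> e * norm (y - 0)"
      using gd[unfolded has_derivative_at_alt] \<open>e > 0\<close> by blast
    show ?thesis unfolding eventually_at using d by (auto simp: dist_norm)
  qed
  have kbound: "eventually (\<lambda>t. norm (k t - k 0) \<le> 2 * C * (M + 1) * norm t) (at 0)"
  proof -
    have "eventually (\<lambda>t. norm (R t) \<le> (1 / (2*C)) * norm (k t - k 0)) (at 0)"
      using Rsmall[of "1/(2*C)"] C by simp
    moreover have "eventually (\<lambda>t. norm (g t - g 0 - g' t) \<le> 1 * norm t) (at 0)"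
      using gsmall[of 1] by simp
    ultimately show ?thesis using ev
    proof eventually_elim
      case (elim t)
      have "norm (k t - k 0) \<le> norm (P (g t - g 0)) + norm (P (R t))"
        using kdecomp[OF elim(3)] by (metis norm_triangle_ineq4)
      also have "\<dots> \<le> norm (g t - g 0) * C + norm (R t) * C"
        using C by (intro add_mono) auto
      also have "norm (R t) * C \<le> (1 / (2*C)) * norm (k t - k 0) * C"
        using elim(1) C by (intro mult_right_mono) auto
      also have "(1 / (2*C)) * norm (k t - k 0) * C = norm (k t - k 0) / 2"
        using C by (simp add: field_simps)
      finally have a: "norm (k t - k 0) \<le> 2 * C * norm (g t - g 0)"
        using C by (simp add: field_simps)
      have "norm (g t - g 0) \<le> norm (g' t) + norm (g t - g 0 - g' t)"
        by (metis add.commute diff_add_cancel norm_triangle_ineq)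
      also have "\<dots> \<le> norm t * M + norm t" using M elim(2) by (intro add_mono) auto
      finally have "norm (g t - g 0) \<le> (M + 1) * norm t" by (simp add: algebra_simps)
      then have "2 * C * norm (g t - g 0) \<le> 2 * C * ((M+1) * norm t)"
        using C by (intro mult_left_mono) auto
      with a show ?case by (simp add: algebra_simps)
    qed
  qed
  define K where "K = 2 * C * (M + 1)"
  have K: "K > 0" using C M by (simp add: K_def)
  show ?thesis
    unfolding has_derivative_at_alt
  proof (intro conjI allI impI)
    show "bounded_linear (\<lambda>t. P (g' t))"
      using P.bounded_linear_axioms g'.bounded_linear_axioms
      by (rule bounded_linear_compose)
    fix e :: real assume e: "e > 0"
    have "eventually (\<lambda>t. norm (R t) \<le> (e / (2*C*K)) * norm (k t - k 0)) (at 0)"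
      using Rsmall[of "e / (2*C*K)"] C K e by simp
    moreover have "eventually (\<lambda>t. norm (g t - g 0 - g' t) \<le> (e / (2*C)) * norm t) (at 0)"
      using gsmall[of "e / (2*C)"] C e by simp
    ultimately have "eventually (\<lambda>t. norm (k t - k 0 - P (g' (t - 0))) \<le> e * norm (t - 0)) (at 0)"
      using ev kbound
    proof eventually_elim
      case (elim t)
      have "k t - k 0 - P (g' t) = P (g t - g 0 - g' t) - P (R t)"
        using kdecomp[OF elim(3)] by (simp add: P.diff)
      then have "norm (k t - k 0 - P (g' t)) \<le> norm (P (g t - g 0 - g' t)) + norm (P (R t))"
        by (metis norm_triangle_ineq4)
      also have "\<dots> \<le> norm (g t - g 0 - g' t) * C + norm (R t) * C"
        using C by (intro add_mono) auto
      also have "\<dots> \<le> (e / (2*C)) * norm t * C + (e / (2*C*K)) * norm (k t - k 0) * C"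
        using C elim by (intro add_mono mult_right_mono) auto
      also have "(e / (2*C*K)) * norm (k t - k 0) * C \<le> (e / (2*C*K)) * (K * norm t) * C"
        using C K e elim(4) by (intro mult_right_mono mult_left_mono) (auto simp: K_def)
      also have "(e / (2*C)) * norm t * C + (e / (2*C*K)) * (K * norm t) * C = e * norm t"
        using C K by (simp add: field_simps)
      finally show ?case by simp
    qed
    then obtain d where d: "d > 0" "\<And>t. t \<noteq> 0 \<Longrightarrow> dist t 0 < d \<Longrightarrow> norm (k t - k 0 - P (g' (t - 0))) \<le> e * norm (t - 0)"
      unfolding eventually_at by blast
    show "\<exists>d>0. \<forall>y. norm (y - 0) < d \<longrightarrow> norm (k y - k 0 - P (g' (y - 0))) \<le> e * norm (y - 0)"
    proof (intro exI conjI allI impI)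
      fix y :: real assume "norm (y - 0) < d"
      then show "norm (k y - k 0 - P (g' (y - 0))) \<le> e * norm (y - 0)"
        using d by (cases "y = 0") (auto simp: dist_norm g'.zero P.zero)
    qed (rule d(1))
  qed
qed

lemma left_inv_exists:
  fixes L :: "'a::euclidean_space \<Rightarrow> 'b::euclidean_space"
  assumes "linear L" "inj L"
  shows "\<exists>P. bounded_linear P \<and> (\<forall>x. P (L x) = x)"
proof -
  obtain P where "linear P" "P \<circ> L = id" using linear_injective_left_inverse[OF assms] by blast
  then show ?thesis by (auto simp: linear_conv_bounded_linear fun_eq_iff)
qed

lemma tangent_chart_sup:
  assumes ch: "cchart S W D \<phi> \<phi>'" and d: "d \<in> D"
  shows "\<phi>' d h \<in> tangent_space S (\<phi> d)"
proof -
  have oD: "open D" and im: "\<phi> ` D = S \<inter> W" and der: "(\<phi> has_derivative \<phi>' d) (at d)"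
    using ch d by (auto simp: cchart_def)
  interpret L: bounded_linear "\<phi>' d" using der by (simp add: has_derivative_def)
  obtain r where r: "r > 0" "ball d r \<subseteq> D" using oD d open_contains_ball by blast
  define e where "e = r / (norm h + 1)"
  have e: "e > 0" using r unfolding e_def by (intro divide_pos_pos) (auto intro: add_nonneg_pos)
  define g where "g t = \<phi> (d + t *\<^sub>R h)" for t :: real
  have hp: "0 < norm h + 1" using norm_ge_zero[of h] by linarith
  have "g t \<in> S" if "\<bar>t\<bar> < e" for t
  proof -
    have "norm (t *\<^sub>R h) = \<bar>t\<bar> * norm h" by simp
    also have "\<dots> \<le> \<bar>t\<bar> * (norm h + 1)" by (simp add: mult_left_mono)
    also have "\<dots> < e * (norm h + 1)"
      using that hp by (intro mult_strict_right_mono) auto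
    also have "\<dots> = r" using hp by (simp add: e_def)
    finally have "d + t *\<^sub>R h \<in> D" using r by (auto simp: dist_norm)
    then show ?thesis using im by (auto simp: g_def)
  qed
  moreover have "(g has_vector_derivative \<phi>' d h) (at 0)"
  proof -
    have a: "((\<lambda>t::real. d + t *\<^sub>R h) has_derivative (\<lambda>s. s *\<^sub>R h)) (at 0)"
      by (auto intro!: derivative_eq_intros)
    have "((\<lambda>t::real. \<phi> (d + t *\<^sub>R h)) has_derivative (\<lambda>s. \<phi>' d (s *\<^sub>R h))) (at 0)"
      using has_derivative_compose[OF a, of \<phi> "\<phi>' d"] der by (simp add: o_def)
    then show ?thesis by (simp add: has_vector_derivative_def g_def[abs_def] L.scaleR)
  qed
  ultimately show ?thesis unfolding tangent_space_def using e
    by (intro CollectI exI[of _ g] exI[of _ e]) (auto simp: g_def)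
qed

lemma tangent_chart_sub:
  fixes \<phi> :: "complex^('d::finite) \<Rightarrow> complex^('m::finite)"
  assumes ch: "cchart S W D \<phi> \<phi>'" and d: "d \<in> D" and v: "v \<in> tangent_space S (\<phi> d)"
  shows "\<exists>h. v = \<phi>' d h"
proof -
  have oW: "open W" and im: "\<phi> ` D = S \<inter> W" and der: "(\<phi> has_derivative \<phi>' d) (at d)"
    and injD: "inj_on \<phi> D" and invc: "continuous_on (S \<inter> W) (inv_into D \<phi>)"
    and injd: "inj (\<phi>' d)"
    using ch d by (auto simp: cchart_def)
  have lin: "linear (\<phi>' d)" using der by (simp add: has_derivative_def bounded_linear.linear)
  obtain P where P: "bounded_linear P" "\<And>x. P (\<phi>' d x) = x"
    using left_inv_exists[OF lin injd] by blast
  obtain g e where g: "0 < e" "g 0 = \<phi> d" "\<And>t. \<bar>t\<bar> < e \<Longrightarrow> g t \<in> S"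
    "(g has_vector_derivative v) (at (0::real))"
    using v unfolding tangent_space_def by blast
  have gd: "(g has_derivative (\<lambda>s. s *\<^sub>R v)) (at 0)" using g(4) by (simp add: has_vector_derivative_def)
  have gc: "(g \<longlongrightarrow> g 0) (at 0)"
    using has_derivative_continuous[OF gd] by (simp add: continuous_at)
  have pW: "\<phi> d \<in> W" using im d by auto
  have evW: "eventually (\<lambda>t. g t \<in> W) (at 0)"
    using gc oW pW g(2) by (auto intro: topological_tendstoD)
  have evS: "eventually (\<lambda>t. g t \<in> S) (at (0::real))"
    unfolding eventually_at using g(1,3) by (intro exI[of _ e]) (auto simp: dist_norm)
  have evSW: "eventually (\<lambda>t. g t \<in> S \<inter> W) (at 0)" using evW evS by eventually_elim auto
  define k where "k t = inv_into D \<phi> (g t)" for t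
  have k0: "k 0 = d" using g(2) injD d by (simp add: k_def)
  have "continuous (at (g 0) within (S \<inter> W)) (inv_into D \<phi>)"
    using invc pW g(2) d im by (metis IntI continuous_on_eq_continuous_within image_eqI)
  then have kc: "(k \<longlongrightarrow> k 0) (at 0)"
    unfolding k_def using continuous_within_tendsto_compose[OF _ evSW gc] by blast
  have ev: "eventually (\<lambda>t. \<phi> (k t) = g t) (at 0)"
    using evSW by eventually_elim (auto simp: k_def im[symmetric] f_inv_into_f)
  have kd: "(k has_derivative (\<lambda>t. P (t *\<^sub>R v))) (at 0)"
    by (rule inv_deriv[OF _ P(1) P(2) kc ev]) (use der k0 g(2) gd in auto)
  have "((\<phi> \<circ> k) has_derivative (\<phi>' d \<circ> (\<lambda>t. P (t *\<^sub>R v)))) (at 0)"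
    using has_derivative_compose[OF kd, of \<phi> "\<phi>' d"] der k0 by (simp add: o_def)
  then have "(g has_derivative (\<phi>' d \<circ> (\<lambda>t. P (t *\<^sub>R v)))) (at 0)"
    by (rule has_derivative_transform_eventually) (use ev k0 g(2) in auto)
  then have "(\<lambda>s. s *\<^sub>R v) = (\<phi>' d \<circ> (\<lambda>t. P (t *\<^sub>R v)))"
    using gd has_derivative_unique by blast
  then have "1 *\<^sub>R v = \<phi>' d (P (1 *\<^sub>R v))" by (metis comp_apply)
  then show ?thesis by auto
qed

lemma tangent_chart_eq:
  fixes \<phi> :: "complex^('d::finite) \<Rightarrow> complex^('m::finite)"
  assumes ch: "cchart S W D \<phi> \<phi>'" and d: "d \<in> D"
  shows "tangent_space S (\<phi> d) = range (\<phi>' d)"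
  using tangent_chart_sub[OF assms] tangent_chart_sup[OF assms] by blast

lemma norm_smult: "norm (c *s (x::complex^'m::finite)) = norm c * norm x"
  by (simp add: norm_vec_def norm_mult L2_set_right_distrib)

lemma has_derivative_smult_line:
  "((\<lambda>z::complex. d + z *s (h::complex^'m::finite)) has_derivative (\<lambda>s. s *s h)) (at z)"
  by (rule has_derivative_vecI) (auto intro!: derivative_eq_intros)

lemma chart_deriv_cont:
  fixes \<phi> :: "complex^('d::finite) \<Rightarrow> complex^('m::finite)"
  assumes ch: "cchart S W D \<phi> \<phi>'" and d0: "d0 \<in> D"
  shows "((\<lambda>d. \<phi>' d h) \<longlongrightarrow> \<phi>' d0 h) (at d0)"
proof -
  have oD: "open D" and der: "\<And>d. d \<in> D \<Longrightarrow> (\<phi> has_derivative \<phi>' d) (at d)"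
    and hom: "\<And>d c h. d \<in> D \<Longrightarrow> \<phi>' d (c *s h) = c *s \<phi>' d h"
    using ch by (auto simp: cchart_def)
  obtain R where R: "R > 0" "cball d0 R \<subseteq> D" using oD d0 open_contains_cball by blast
  have contD: "continuous_on D \<phi>"
    using der by (meson has_derivative_continuous continuous_at_imp_continuous_on)
  have uc: "uniformly_continuous_on (cball d0 R) \<phi>"
    by (rule compact_uniformly_continuous) (use contD R in \<open>auto intro: continuous_on_subset\<close>)
  have hp: "0 < norm h + 1" using norm_ge_zero[of h] by linarith
  define r where "r = R / (2 * (norm h + 1))"
  have r: "r > 0" using R hp by (simp add: r_def)
  have small: "norm (z *s h) < R / 2" if "z \<in> ball 0 r" for z
  proof -
    have "norm (z *s h) = norm z * norm h" by (rule norm_smult)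
    also have "\<dots> \<le> norm z * (norm h + 1)" by (simp add: mult_left_mono)
    also have "\<dots> < r * (norm h + 1)" using that hp by (intro mult_strict_right_mono) auto
    also have "\<dots> = R / 2" using hp by (simp add: r_def field_simps)
    finally show ?thesis .
  qed
  have comp: "((\<lambda>d. \<phi>' d h $ j) \<longlongrightarrow> \<phi>' d0 h $ j) (at d0)" for j
  proof -
    define u where "u d z = \<phi> (d + z *s h) $ j" for d z
    have uder: "(u d has_field_derivative (\<phi>' (d + z *s h) h $ j)) (at z)"
      if "d \<in> ball d0 (R/2)" "z \<in> ball 0 r" for d z
    proof -
      have "dist d0 (d + z *s h) \<le> dist d0 d + norm (z *s h)"
        by (metis dist_norm dist_triangle2 norm_minus_commute diff_add_cancel add_diff_cancel_left' dist_add_cancel)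
      also have "\<dots> < R" using that small[OF that(2)] by (simp add: dist_commute)
      finally have inD: "d + z *s h \<in> D" using R by auto
      have "((\<lambda>z. \<phi> (d + z *s h)) has_derivative (\<lambda>s. \<phi>' (d + z *s h) (s *s h))) (at z)"
        using has_derivative_compose[OF has_derivative_smult_line der[OF inD]] by (simp add: o_def)
      then have "((\<lambda>z. \<phi> (d + z *s h)) has_derivative (\<lambda>s. s *s \<phi>' (d + z *s h) h)) (at z)"
        using hom[OF inD] by simp
      note th = this
      have "((\<lambda>z. \<phi> (d + z *s h) $ j) has_derivative (\<lambda>s. (s *s \<phi>' (d + z *s h) h) $ j)) (at z)"
        using has_derivative_compose[OF th bounded_linear_imp_has_derivative[OF bounded_linear_vec_nth[of j]]] unfolding o_def .
      note th3 = this
      show ?thesis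
      proof -
        have eq: "(*) (\<phi>' (d + z *s h) h $ j) = (\<lambda>s. s * \<phi>' (d + z *s h) h $ j)"
          by (auto simp: fun_eq_iff mult.commute)
        show ?thesis using th3 by (simp add: has_field_derivative_def u_def[abs_def] eq)
      qed
    qed
    have hol: "u d holomorphic_on ball 0 r" if "d \<in> ball d0 (R/2)" for d
      using uder[OF that] by (meson holomorphic_on_open open_ball)
    have dv: "deriv (u d) 0 = \<phi>' d h $ j" if "d \<in> ball d0 (R/2)" for d
      using uder[OF that, of 0] r by (simp add: DERIV_imp_deriv)
    have ul: "uniform_limit (ball 0 r) u (u d0) (at d0)"
      unfolding uniform_limit_iff
    proof (intro allI impI)
      fix e :: real assume e: "e > 0"
      obtain \<delta> where \<delta>: "\<delta> > 0" "\<And>x x'. x \<in> cball d0 R \<Longrightarrow> x' \<in> cball d0 R \<Longrightarrow> dist x' x < \<delta> \<Longrightarrow> dist (\<phi> x') (\<phi> x) < e"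
        using uc e unfolding uniformly_continuous_on_def by blast
      have "eventually (\<lambda>d. d \<in> ball d0 (min \<delta> (R/2))) (at d0)"
        using \<delta> R by (intro eventually_at_in_open') auto
      then show "eventually (\<lambda>d. \<forall>z\<in>ball 0 r. dist (u d z) (u d0 z) < e) (at d0)"
      proof eventually_elim
        case (elim d)
        show ?case
        proof
          fix z :: complex assume z: "z \<in> ball 0 r"
          have s: "norm (z *s h) < R/2" by (rule small[OF z])
          have "dist d0 (d + z *s h) \<le> dist d0 d + norm (z *s h)"
            by (metis dist_norm dist_triangle2 norm_minus_commute diff_add_cancel add_diff_cancel_left' dist_add_cancel)
          then have a: "d + z *s h \<in> cball d0 R" using elim s by (auto simp: dist_commute)
          have "dist d0 (d0 + z *s h) = norm (z *s h)" by (simp add: dist_norm)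
          moreover have "norm (z *s h) \<le> R" using s R by linarith
          ultimately have b: "d0 + z *s h \<in> cball d0 R" by auto
          have c: "dist (d + z *s h) (d0 + z *s h) < \<delta>" using elim by (simp add: dist_norm norm_minus_commute)
          have "dist (u d z) (u d0 z) \<le> dist (\<phi> (d + z *s h)) (\<phi> (d0 + z *s h))"
            unfolding u_def by (rule dist_vec_nth_le)
          also have "\<dots> < e" by (rule \<delta>(2)[OF b a c])
          finally show "dist (u d z) (u d0 z) < e" .
        qed
      qed
    qed
    have "((\<lambda>d. deriv (u d) 0) \<longlongrightarrow> deriv (u d0) 0) (at d0)"
    proof (rule deriv_complex_uniform_limit[OF ul])
      show "eventually (\<lambda>d. u d holomorphic_on ball 0 r) (at d0)"
        using R by (intro eventually_mono[OF eventually_at_in_open'[of "ball d0 (R/2)"]] hol) auto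
    qed (use r in auto)
    moreover have "eventually (\<lambda>d. deriv (u d) 0 = \<phi>' d h $ j) (at d0)"
      using R by (intro eventually_mono[OF eventually_at_in_open'[of "ball d0 (R/2)"]] dv) auto
    ultimately show ?thesis using dv[of d0] R by (simp add: tendsto_cong)
  qed
  show ?thesis by (rule vec_tendstoI) (use comp in \<open>auto intro: tendstoD\<close>)
qed

definition mkp :: "complex \<Rightarrow> complex^('n::finite) \<Rightarrow> complex^('n option)" where
  "mkp a h = (\<chi> j. case j of None \<Rightarrow> a | Some i \<Rightarrow> h$i)"
definition tlp :: "complex^('n::finite option) \<Rightarrow> complex^'n" where
  "tlp e = (\<chi> i. e$Some i)"

lemma mkp_nth[simp]: "mkp a h $ None = a" "mkp a h $ Some i = h $ i"
  by (simp_all add: mkp_def)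
lemma tlp_nth[simp]: "tlp e $ i = e $ Some i" by (simp add: tlp_def)
lemma tlp_mkp[simp]: "tlp (mkp a h) = h" by (simp add: vec_eq_iff)
lemma mkp_eta: "mkp (e$None) (tlp e) = e" by (simp add: vec_eq_iff mkp_def split: option.split)
lemma tlp_add: "tlp (x + y) = tlp x + tlp y" by (simp add: vec_eq_iff)
lemma tlp_scale: "tlp (c *s x) = c *s tlp x" by (simp add: vec_eq_iff)
lemma tlp_scaleR: "tlp (c *\<^sub>R x) = c *\<^sub>R tlp x" by (simp add: vec_eq_iff)
lemma tlp_zero[simp]: "tlp 0 = 0" by (simp add: vec_eq_iff)
lemma linear_tlp: "linear tlp" by (rule linearI) (simp_all add: tlp_add tlp_scaleR)
lemma bounded_linear_tlp: "bounded_linear tlp" using linear_tlp linear_conv_bounded_linear by blast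
lemma mkp_zero: "mkp 0 0 = 0" by (simp add: vec_eq_iff mkp_def split: option.split)
lemma mkp_eq_iff: "mkp a h = mkp a' h' \<longleftrightarrow> a = a' \<and> h = h'"
  by (metis mkp_nth(1) tlp_mkp)

lemma has_derivative_mk:
  fixes a b :: "'a::real_normed_vector \<Rightarrow> complex" and v :: "'a \<Rightarrow> complex^('n::finite+'n)"
  assumes "(a has_derivative a') (at x)" "(b has_derivative b') (at x)" "(v has_derivative v') (at x)"
  shows "((\<lambda>x. mk (a x) (b x) (v x)) has_derivative (\<lambda>h. mk (a' h) (b' h) (v' h))) (at x)"
proof (rule has_derivative_vecI)
  fix j :: "'n option + 'n option"
  have vc: "((\<lambda>x. v x $ i) has_derivative (\<lambda>h. v' h $ i)) (at x)" for i
    using has_derivative_compose[OF assms(3) bounded_linear_imp_has_derivative[OF bounded_linear_vec_nth[of i]]]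
    unfolding o_def .
  show "((\<lambda>x. mk (a x) (b x) (v x) $ j) has_derivative (\<lambda>h. mk (a' h) (b' h) (v' h) $ j)) (at x)"
    by (cases j rule: sum.exhaust; rename_tac k; case_tac k) (use assms vc in auto)
qed

lemma has_derivative_smult_fun:
  fixes c :: "'a::real_normed_vector \<Rightarrow> complex" and v :: "'a \<Rightarrow> complex^('m::finite)"
  assumes "(c has_derivative c') (at x)" "(v has_derivative v') (at x)"
  shows "((\<lambda>x. c x *s v x) has_derivative (\<lambda>h. c' h *s v x + c x *s v' h)) (at x)"
proof (rule has_derivative_vecI)
  fix j
  have vc: "((\<lambda>x. v x $ j) has_derivative (\<lambda>h. v' h $ j)) (at x)"
    using has_derivative_compose[OF assms(2) bounded_linear_imp_has_derivative[OF bounded_linear_vec_nth[of j]]]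
    unfolding o_def .
  show "((\<lambda>x. (c x *s v x) $ j) has_derivative (\<lambda>h. (c' h *s v x + c x *s v' h) $ j)) (at x)"
    using has_derivative_mult[OF assms(1) vc] by (simp add: algebra_simps)
qed

lemma clin_expand:
  fixes T :: "complex^('d::finite) \<Rightarrow> 'b::real_vector"
  assumes "linear T"
  shows "T x = (\<Sum>i\<in>UNIV. T (x$i *s axis i 1))"
proof -
  have "T x = T (\<Sum>i\<in>UNIV. x$i *s axis i 1)" by (simp add: basis_expansion)
  also have "\<dots> = (\<Sum>i\<in>UNIV. T (x$i *s axis i 1))" by (rule linear_sum[OF assms])
  finally show ?thesis .
qed

lemma gamma_sum_left:
  "gamma (\<Sum>i\<in>UNIV. c i *s u i) w = (\<Sum>i\<in>(UNIV::'i::finite set). c i * gamma (u i) w)"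
  by (simp add: gamma_def Omega_sum_left Omega_scale_left sum_distrib_left algebra_simps)

lemma gamma_sum_right:
  "gamma w (\<Sum>i\<in>UNIV. c i *s u i) = (\<Sum>i\<in>(UNIV::'i::finite set). cnj (c i) * gamma w (u i))"
  by (simp add: gamma_def tau_sum tau_scale Omega_sum_right Omega_scale_right sum_distrib_left algebra_simps)

lemma det_ker:
  fixes A :: "complex^'m::finite^'m"
  assumes "det A \<noteq> 0" "A *v x = 0"
  shows "x = 0"
  using assms invertible_det_nz[of A] invertible_left_inverse[of A] matrix_left_invertible_ker[of A]
  by blast

lemma Omega_mk': "Omega (mk a b v) (mk a' b' v') = a*b' - b*a' + Omega v v'"
  by (rule Omega_mk)

lemma gamma_mk: "gamma (mk a b v) (mk a' b' v') = \<i> * (a * cnj b' - b * cnj a' + Omega v (tau v'))"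
  by (simp add: gamma_def tau_mk Omega_mk)

definition Phi :: "(complex^('n::finite+'n) \<Rightarrow> complex) \<Rightarrow> (complex^'n \<Rightarrow> complex^('n+'n)) \<Rightarrow> complex^('n option) \<Rightarrow> complex^('n option + 'n option)" where
  "Phi f \<phi> e = mk (e$None) (e$None * f (\<phi> (tlp e))) (e$None *s \<phi> (tlp e))"

definition Phi' :: "(complex^('n::finite+'n) \<Rightarrow> complex) \<Rightarrow> (complex^'n \<Rightarrow> complex^('n+'n)) \<Rightarrow> (complex^'n \<Rightarrow> complex^'n \<Rightarrow> complex^('n+'n))
   \<Rightarrow> complex^('n option) \<Rightarrow> complex^('n option) \<Rightarrow> complex^('n option + 'n option)" where
  "Phi' f \<phi> \<phi>' e k = mk (k$None) (k$None * f (\<phi> (tlp e)) - e$None * Omega (\<phi> (tlp e)) (\<phi>' (tlp e) (tlp k)))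
      (k$None *s \<phi> (tlp e) + e$None *s \<phi>' (tlp e) (tlp k))"

definition Dc :: "(complex^('n::finite)) set \<Rightarrow> (complex^('n option)) set" where
  "Dc B = {e. e$None \<noteq> 0 \<and> tlp e \<in> B}"

lemma Phi_lift: "Phi f \<phi> e = e$None *s lift f (\<phi> (tlp e))"
  by (simp add: Phi_def lift_mk mk_scale)

lemma Phi_mkp: "Phi f \<phi> (mkp c d) = c *s lift f (\<phi> d)"
  by (simp add: Phi_lift)

lemma con_eq: "Phi f \<phi> ` Dc B = con (\<phi> ` B) f"
proof
  show "Phi f \<phi> ` Dc B \<subseteq> con (\<phi> ` B) f"
    by (auto simp: Dc_def con_def Phi_lift)
  show "con (\<phi> ` B) f \<subseteq> Phi f \<phi> ` Dc B"
  proof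
    fix x assume "x \<in> con (\<phi> ` B) f"
    then obtain c d where "c \<noteq> 0" "d \<in> B" "x = c *s lift f (\<phi> d)" by (auto simp: con_def)
    then show "x \<in> Phi f \<phi> ` Dc B"
      by (intro image_eqI[of _ _ "mkp c d"]) (auto simp: Phi_mkp Dc_def)
  qed
qed

lemma smult_cancel: "c \<noteq> 0 \<Longrightarrow> c *s (x::complex^'m::finite) = c *s y \<Longrightarrow> x = y"
  by (simp add: vec_eq_iff)

lemma Phi_inj:
  assumes "inj_on \<phi> D0" "B \<subseteq> D0"
  shows "inj_on (Phi f \<phi>) (Dc B)"
proof
  fix e e' assume e: "e \<in> Dc B" "e' \<in> Dc B" and eq: "Phi f \<phi> e = Phi f \<phi> e'"
  have 1: "e$None = e'$None" using arg_cong[OF eq, of "\<lambda>x. x $ Inl None"] by (simp add: Phi_def)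
  have "e$None *s \<phi> (tlp e) = e$None *s \<phi> (tlp e')"
    using arg_cong[OF eq, of proj] 1 by (simp add: Phi_def)
  moreover have "e$None \<noteq> 0" using e(1) unfolding Dc_def by blast
  ultimately have "\<phi> (tlp e) = \<phi> (tlp e')" using smult_cancel by blast
  then have "tlp e = tlp e'" by (rule inj_onD[OF assms(1)]) (use e assms(2) in \<open>auto simp: Dc_def\<close>)
  then have "mkp (e$None) (tlp e) = mkp (e'$None) (tlp e')" using 1 by (simp only:)
  then show "e = e'" by (simp only: mkp_eta)
qed
lemma open_Dc:
  fixes B :: "(complex^'n::finite) set"
  assumes B: "open B" shows "open (Dc B)"
proof -
  have "Dc B = {e. e$None \<noteq> 0} \<inter> tlp -` B" by (auto simp: Dc_def)
  moreover have "open {e::complex^('n::finite option). e$None \<noteq> 0}"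
    by (rule open_Collect_neq; intro continuous_intros)
  moreover have "open (tlp -` B)"
    by (rule continuous_open_vimage[OF B]) (simp add: linear_continuous_at bounded_linear_tlp)
  ultimately show "open (Dc B)" by auto
qed

lemma continuous_on_mkp:
  assumes "continuous_on S a" "continuous_on S h"
  shows "continuous_on S (\<lambda>x. mkp (a x) (h x))"
  unfolding mkp_def
proof (rule continuous_on_vec_lambda)
  fix i
  show "continuous_on S (\<lambda>x. case i of None \<Rightarrow> a x | Some k \<Rightarrow> h x $ k)"
    by (cases i) (simp_all, (intro continuous_intros assms)+)
qed

lemma proj_nth': "proj x $ j = x $ (case_sum (\<lambda>i. Inl (Some i)) (\<lambda>i. Inr (Some i)) j)"
  by (simp add: proj_def split: sum.split)


lemma Phi_invc:
  assumes ch: "cchart L W0 D0 \<phi> \<phi>'" and BD: "B \<subseteq> D0"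
  shows "continuous_on (con (\<phi> ` B) f) (inv_into (Dc B) (Phi f \<phi>))"
proof -
  have injD: "inj_on \<phi> D0" and im: "\<phi> ` D0 = L \<inter> W0" and invc: "continuous_on (L \<inter> W0) (inv_into D0 \<phi>)"
    using ch by (auto simp: cchart_def)
  define S where "S = con (\<phi> ` B) f"
  define g where "g x = mkp (x$Inl None) (inv_into D0 \<phi> (inverse (x$Inl None) *s proj x))" for x
  have nz: "x$Inl None \<noteq> 0" if "x \<in> S" for x
    using that by (auto simp: S_def con_def lift_def)
  have rep: "inverse (x$Inl None) *s proj x = \<phi> (tlp e)" if "e \<in> Dc B" "x = Phi f \<phi> e" for x e
  proof -
    have "e $ None \<noteq> 0" using that(1) unfolding Dc_def by blast
    then show ?thesis using that(2) by (simp add: Phi_def vector_smult_assoc)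
  qed
  have inS: "inverse (x$Inl None) *s proj x \<in> L \<inter> W0" if "x \<in> S" for x
  proof -
    from that obtain e where e: "e \<in> Dc B" "x = Phi f \<phi> e" using con_eq[of f \<phi> B] unfolding S_def by blast
    have "tlp e \<in> D0" using e(1) BD unfolding Dc_def by blast
    then show ?thesis using rep[OF e] im by blast
  qed
  have eq: "inv_into (Dc B) (Phi f \<phi>) x = g x" if "x \<in> S" for x
  proof -
    from that obtain e where e: "e \<in> Dc B" "x = Phi f \<phi> e" using con_eq[of f \<phi> B] unfolding S_def by blast
    have "inv_into (Dc B) (Phi f \<phi>) x = e" using e Phi_inj[OF injD BD] by (simp add: inv_into_f_f)
    moreover have "g x = e"
    proof -
      have "tlp e \<in> D0" using e(1) BD unfolding Dc_def by blast
      then have "inv_into D0 \<phi> (\<phi> (tlp e)) = tlp e" using injD by (simp add: inv_into_f_f)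
      moreover have "x $ Inl None = e $ None" using e(2) by (simp add: Phi_def)
      ultimately show ?thesis unfolding g_def rep[OF e] by (simp add: mkp_eta)
    qed
    ultimately show ?thesis by simp
  qed
  have cg: "continuous_on S g"
    unfolding g_def
  proof (intro continuous_on_mkp)
    show "continuous_on S (\<lambda>x. x $ Inl None)" by (intro continuous_intros)
    have c1: "continuous_on S (\<lambda>x. inverse (x$Inl None) *s proj x)"
      unfolding vector_scalar_mult_def proj_nth'
      by (intro continuous_on_vec_lambda continuous_intros) (simp add: nz)
    show "continuous_on S (\<lambda>x. inv_into D0 \<phi> (inverse (x $ Inl None) *s proj x))"
      by (rule continuous_on_compose2[OF invc c1]) (use inS in blast)
  qed
  show ?thesis unfolding S_def[symmetric] using cg eq continuous_on_eq by metis
qed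

lemma lp_deriv:
  fixes \<phi> :: "complex^('n::finite) \<Rightarrow> complex^('n+'n)"
  assumes lp: "lagrangian_pair L f" and ch: "cchart L W0 D0 \<phi> \<phi>'" and d: "d \<in> D0"
  shows "((f \<circ> \<phi>) has_derivative (\<lambda>h. - Omega (\<phi> d) (\<phi>' d h))) (at d)"
  using lp ch d unfolding lagrangian_pair_def by blast

lemma Phi_deriv:
  fixes \<phi> :: "complex^('n::finite) \<Rightarrow> complex^('n+'n)"
  assumes lp: "lagrangian_pair L f" and ch: "cchart L W0 D0 \<phi> \<phi>'" and BD: "B \<subseteq> D0" and e: "e \<in> Dc B"
  shows "(Phi f \<phi> has_derivative Phi' f \<phi> \<phi>' e) (at e)"
proof -
  define d where "d = tlp e"
  have d: "d \<in> D0" using e BD by (auto simp: Dc_def d_def)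
  have Fd: "((f \<circ> \<phi>) has_derivative (\<lambda>h. - Omega (\<phi> d) (\<phi>' d h))) (at (tlp e))"
    using lp_deriv[OF lp ch d] by (simp add: d_def)
  have phd: "(\<phi> has_derivative \<phi>' d) (at (tlp e))" using ch d by (simp add: cchart_def d_def)
  have t: "(tlp has_derivative tlp) (at e)"
    by (rule bounded_linear_imp_has_derivative[OF bounded_linear_tlp])
  have Ft: "((\<lambda>x. f (\<phi> (tlp x))) has_derivative (\<lambda>k. - Omega (\<phi> d) (\<phi>' d (tlp k)))) (at e)"
    using has_derivative_compose[OF t Fd] by (simp add: o_def)
  have pt: "((\<lambda>x. \<phi> (tlp x)) has_derivative (\<lambda>k. \<phi>' d (tlp k))) (at e)"
    using has_derivative_compose[OF t phd] by (simp add: o_def)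
  have a: "((\<lambda>x::complex^('n option). x $ None) has_derivative (\<lambda>k. k $ None)) (at e)"
    by (rule bounded_linear_imp_has_derivative[OF bounded_linear_vec_nth])
  have b: "((\<lambda>x. x$None * f (\<phi> (tlp x))) has_derivative
      (\<lambda>k. e$None * (- Omega (\<phi> d) (\<phi>' d (tlp k))) + k$None * f (\<phi> (tlp e)))) (at e)"
    by (rule has_derivative_mult[OF a Ft])
  have v: "((\<lambda>x. x$None *s \<phi> (tlp x)) has_derivative
      (\<lambda>k. k$None *s \<phi> (tlp e) + e$None *s \<phi>' d (tlp k))) (at e)"
    by (rule has_derivative_smult_fun[OF a pt])
  have "((\<lambda>x. mk (x$None) (x$None * f (\<phi> (tlp x))) (x$None *s \<phi> (tlp x))) has_derivative
      (\<lambda>k. mk (k$None) (e$None * (- Omega (\<phi> d) (\<phi>' d (tlp k))) + k$None * f (\<phi> (tlp e)))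
          (k$None *s \<phi> (tlp e) + e$None *s \<phi>' d (tlp k)))) (at e)"
    by (rule has_derivative_mk[OF a b v])
  moreover have "(\<lambda>x. mk (x$None) (x$None * f (\<phi> (tlp x))) (x$None *s \<phi> (tlp x))) = Phi f \<phi>"
    by (simp add: fun_eq_iff Phi_def)
  moreover have "(\<lambda>k. mk (k$None) (e$None * (- Omega (\<phi> d) (\<phi>' d (tlp k))) + k$None * f (\<phi> (tlp e)))
          (k$None *s \<phi> (tlp e) + e$None *s \<phi>' d (tlp k))) = Phi' f \<phi> \<phi>' e"
    by (simp add: fun_eq_iff Phi'_def d_def algebra_simps)
  ultimately show ?thesis by simp
qed

lemma Phi'_hom:
  assumes ch: "cchart L W0 D0 \<phi> \<phi>'" and BD: "B \<subseteq> D0" and e: "e \<in> Dc B"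
  shows "Phi' f \<phi> \<phi>' e (c *s k) = c *s Phi' f \<phi> \<phi>' e k"
proof -
  have d: "tlp e \<in> D0" using e BD by (auto simp: Dc_def)
  have hom: "\<phi>' (tlp e) (c *s h) = c *s \<phi>' (tlp e) h" for h using ch d by (simp add: cchart_def)
  show ?thesis
    by (simp add: Phi'_def mk_scale tlp_scale hom Omega_scale_right vector_add_ldistrib
        vector_smult_assoc algebra_simps)
qed

lemma Phi'_inj:
  assumes ch: "cchart L W0 D0 \<phi> \<phi>'" and BD: "B \<subseteq> D0" and e: "e \<in> Dc B"
    and der: "(Phi f \<phi> has_derivative Phi' f \<phi> \<phi>' e) (at e)"
  shows "inj (Phi' f \<phi> \<phi>' e)"
proof -
  have d: "tlp e \<in> D0" using e BD by (auto simp: Dc_def)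
  have e0: "e$None \<noteq> 0" using e by (auto simp: Dc_def)
  have injd: "inj (\<phi>' (tlp e))" and phd: "(\<phi> has_derivative \<phi>' (tlp e)) (at (tlp e))"
    using ch d by (auto simp: cchart_def)
  interpret pl: bounded_linear "\<phi>' (tlp e)" using phd by (simp add: has_derivative_def)
  have lin: "linear (Phi' f \<phi> \<phi>' e)" using der by (simp add: has_derivative_def bounded_linear.linear)
  show ?thesis
    unfolding linear_inj_iff_eq_0[OF lin]
  proof (intro allI impI)
    fix k assume "Phi' f \<phi> \<phi>' e k = 0"
    then have "mk (k$None) (k$None * f (\<phi> (tlp e)) - e$None * Omega (\<phi> (tlp e)) (\<phi>' (tlp e) (tlp k)))
      (k$None *s \<phi> (tlp e) + e$None *s \<phi>' (tlp e) (tlp k)) = mk 0 0 0"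
      by (simp add: Phi'_def mk_zero)
    then have k0: "k$None = 0" and "k$None *s \<phi> (tlp e) + e$None *s \<phi>' (tlp e) (tlp k) = 0"
      unfolding mk_eq_iff by auto
    then have "e$None *s \<phi>' (tlp e) (tlp k) = e$None *s 0" by simp
    then have "\<phi>' (tlp e) (tlp k) = 0" using e0 smult_cancel by blast
    then have "\<phi>' (tlp e) (tlp k) = \<phi>' (tlp e) 0" by simp
    then have "tlp k = 0" using injd by (meson injD)
    then have "mkp (k$None) (tlp k) = mkp 0 0" using k0 by (simp only:)
    then show "k = 0" by (simp only: mkp_eta mkp_zero)
  qed
qed

lemma cone_chart:
  assumes lp: "lagrangian_pair L f" and ch: "cchart L W0 D0 \<phi> \<phi>'" and BD: "B \<subseteq> D0" and B: "open B"
  shows "cchart (con (\<phi> ` B) f) UNIV (Dc B) (Phi f \<phi>) (Phi' f \<phi> \<phi>')"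
proof -
  have injD: "inj_on \<phi> D0" using ch by (simp add: cchart_def)
  have der: "\<And>e. e \<in> Dc B \<Longrightarrow> (Phi f \<phi> has_derivative Phi' f \<phi> \<phi>' e) (at e)"
    using Phi_deriv[OF lp ch BD] by blast
  show ?thesis
    unfolding cchart_def
    using open_Dc[OF B] con_eq[of f \<phi> B] Phi_inj[OF injD BD] Phi_invc[OF ch BD, of f]
      der Phi'_inj[OF ch BD _ der] Phi'_hom[OF ch BD]
    by auto
qed

lemma cone_tangent:
  assumes lp: "lagrangian_pair L f" and ch: "cchart L W0 D0 \<phi> \<phi>'" and BD: "B \<subseteq> D0" and B: "open B"
    and e: "e \<in> Dc B"
  shows "tangent_space (con (\<phi> ` B) f) (Phi f \<phi> e) = range (Phi' f \<phi> \<phi>' e)"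
  by (rule tangent_chart_eq[OF cone_chart[OF lp ch BD B] e])

lemma Phi'_iso:
  assumes "Omega (\<phi>' (tlp e) (tlp k)) (\<phi>' (tlp e) (tlp l)) = 0"
  shows "Omega (Phi' f \<phi> \<phi>' e k) (Phi' f \<phi> \<phi>' e l) = 0"
proof -
  define q where "q = \<phi> (tlp e)"
  define pk where "pk = \<phi>' (tlp e) (tlp k)"
  define pl where "pl = \<phi>' (tlp e) (tlp l)"
  have a: "Omega pk q = - Omega q pk" by (rule Omega_antisym)
  show ?thesis
    using assms unfolding Phi'_def Omega_mk q_def[symmetric] pk_def[symmetric] pl_def[symmetric]
    by (simp add: Omega_add_left Omega_add_right Omega_scale_left Omega_scale_right a algebra_simps)
qed

lemma Phi'_gamma_real:
  assumes "tau (\<phi> (tlp e)) = \<phi> (tlp e)" "e $ None = 1"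
  shows "gamma (Phi' f \<phi> \<phi>' e x) (Phi' f \<phi> \<phi>' e y) =
    \<i> * (x$None * cnj (y$None) * (cnj (f (\<phi> (tlp e))) - f (\<phi> (tlp e)))
      + Omega (\<phi>' (tlp e) (tlp x)) (tau (\<phi>' (tlp e) (tlp y))))"
proof -
  define q where "q = \<phi> (tlp e)"
  define px where "px = \<phi>' (tlp e) (tlp x)"
  define py where "py = \<phi>' (tlp e) (tlp y)"
  have tq: "tau q = q" using assms(1) by (simp add: q_def)
  have a: "Omega px q = - Omega q px" by (rule Omega_antisym)
  have b: "Omega q (tau py) = cnj (Omega q py)" using Omega_tau[of q py] tq by simp
  show ?thesis
    unfolding Phi'_def gamma_mk q_def[symmetric] px_def[symmetric] py_def[symmetric] assms(2)
    by (simp add: tau_add tau_scale tq Omega_add_left Omega_add_right Omega_scale_left Omega_scale_right a b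
        algebra_simps)
qed

lemma Phi'_expand:
  assumes lin: "linear (Phi' f \<phi> \<phi>' e)" and hom: "\<And>c k. Phi' f \<phi> \<phi>' e (c *s k) = c *s Phi' f \<phi> \<phi>' e k"
  shows "Phi' f \<phi> \<phi>' e x = (\<Sum>i\<in>UNIV. x$i *s Phi' f \<phi> \<phi>' e (axis i 1))"
  using clin_expand[OF lin, of x] hom by simp

lemma matrix_gamma:
  fixes T :: "complex^('m::finite) \<Rightarrow> complex^('n::finite+'n)"
  assumes exp: "\<And>x. T x = (\<Sum>i\<in>UNIV. x$i *s T (axis i 1))"
  shows "((\<chi> j i. gamma (T (axis i 1)) (T (axis j 1))) *v x) $ j = gamma (T x) (T (axis j 1))"
proof -
  have "gamma (T x) (T (axis j 1)) = (\<Sum>i\<in>UNIV. x$i * gamma (T (axis i 1)) (T (axis j 1)))"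
    by (subst exp) (rule gamma_sum_left)
  then show ?thesis by (simp add: matrix_vector_mult_def mult.commute)
qed

lemma gamma_right_expand:
  fixes T :: "complex^('m::finite) \<Rightarrow> complex^('n::finite+'n)"
  assumes exp: "\<And>x. T x = (\<Sum>i\<in>UNIV. x$i *s T (axis i 1))"
  shows "gamma u (T y) = (\<Sum>j\<in>UNIV. cnj (y$j) * gamma u (T (axis j 1)))"
  by (subst exp) (rule gamma_sum_right)

lemma det_nz_of_ker:
  fixes A :: "complex^'m::finite^'m"
  assumes "\<And>x. A *v x = 0 \<Longrightarrow> x = 0"
  shows "det A \<noteq> 0"
  using assms invertible_det_nz[of A] invertible_left_inverse[of A] matrix_left_invertible_ker[of A]
  by blast

lemma tendsto_Omega:
  assumes "(u \<longlongrightarrow> u0) F" "(w \<longlongrightarrow> w0) F"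
  shows "((\<lambda>x. Omega (u x) (w x)) \<longlongrightarrow> Omega u0 w0) F"
  unfolding Omega_def by (intro tendsto_intros assms)

lemma tendsto_tau:
  assumes "(u \<longlongrightarrow> u0) F"
  shows "((\<lambda>x. tau (u x)) \<longlongrightarrow> tau u0) F"
  unfolding tau_def by (intro tendsto_intros assms)

lemma tendsto_gamma:
  assumes "(u \<longlongrightarrow> u0) F" "(w \<longlongrightarrow> w0) F"
  shows "((\<lambda>x. gamma (u x) (w x)) \<longlongrightarrow> gamma u0 w0) F"
  unfolding gamma_def by (intro tendsto_intros tendsto_Omega tendsto_tau assms)

lemma tendsto_mk:
  fixes v :: "'c \<Rightarrow> complex^('n::finite+'n)"
  assumes "(a \<longlongrightarrow> a0) F" "(b \<longlongrightarrow> b0) F" "(v \<longlongrightarrow> v0) F"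
  shows "((\<lambda>x. mk (a x) (b x) (v x)) \<longlongrightarrow> mk a0 b0 v0) F"
proof (rule vec_tendstoI)
  fix j :: "'n option + 'n option"
  have vc: "((\<lambda>x. v x $ i) \<longlongrightarrow> v0 $ i) F" for i by (intro tendsto_intros assms)
  show "((\<lambda>x. mk (a x) (b x) (v x) $ j) \<longlongrightarrow> mk a0 b0 v0 $ j) F"
    by (cases j rule: sum.exhaust; rename_tac k; case_tac k) (use assms vc in auto)
qed

lemma tendsto_det:
  fixes A :: "'b \<Rightarrow> complex^'m::finite^'m"
  assumes "\<And>i j. ((\<lambda>x. A x $ i $ j) \<longlongrightarrow> A0 $ i $ j) F"
  shows "((\<lambda>x. det (A x)) \<longlongrightarrow> det A0) F"
  unfolding det_def by (intro tendsto_intros assms)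

lemma Phi'_normalize:
  assumes ch: "cchart L W0 D0 \<phi> \<phi>'" and BD: "B \<subseteq> D0" and e: "e \<in> Dc B"
  shows "Phi' f \<phi> \<phi>' e k = Phi' f \<phi> \<phi>' (mkp 1 (tlp e)) (mkp (k$None) (e$None *s tlp k))"
proof -
  have d: "tlp e \<in> D0" using e BD by (auto simp: Dc_def)
  have hom: "\<phi>' (tlp e) (c *s h) = c *s \<phi>' (tlp e) h" for c h using ch d by (simp add: cchart_def)
  show ?thesis by (simp add: Phi'_def hom Omega_scale_right)
qed

lemma range_Phi'_normalize:
  assumes ch: "cchart L W0 D0 \<phi> \<phi>'" and BD: "B \<subseteq> D0" and e: "e \<in> Dc B"
  shows "range (Phi' f \<phi> \<phi>' e) = range (Phi' f \<phi> \<phi>' (mkp 1 (tlp e)))"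
proof
  show "range (Phi' f \<phi> \<phi>' e) \<subseteq> range (Phi' f \<phi> \<phi>' (mkp 1 (tlp e)))"
    using Phi'_normalize[OF assms] by auto
  show "range (Phi' f \<phi> \<phi>' (mkp 1 (tlp e))) \<subseteq> range (Phi' f \<phi> \<phi>' e)"
  proof
    fix y assume "y \<in> range (Phi' f \<phi> \<phi>' (mkp 1 (tlp e)))"
    then obtain k' where y: "y = Phi' f \<phi> \<phi>' (mkp 1 (tlp e)) k'" by blast
    have c: "e$None \<noteq> 0" using e by (auto simp: Dc_def)
    define k where "k = mkp (k'$None) (inverse (e$None) *s tlp k')"
    have "mkp (k$None) (e$None *s tlp k) = mkp (k'$None) (tlp k')"
      using c by (simp add: k_def vector_smult_assoc)
    also have "\<dots> = k'" by (rule mkp_eta)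
    finally have "y = Phi' f \<phi> \<phi>' e k" using y Phi'_normalize[OF assms, of f k] by simp
    then show "y \<in> range (Phi' f \<phi> \<phi>' e)" by blast
  qed
qed

lemma nondeg_from_det:
  fixes T :: "complex^('m::finite) \<Rightarrow> complex^('n::finite+'n)"
  assumes exp: "\<And>x. T x = (\<Sum>i\<in>UNIV. x$i *s T (axis i 1))" and T0: "T 0 = 0"
    and det: "det (\<chi> j i. gamma (T (axis i 1)) (T (axis j 1))) \<noteq> 0"
  shows "nondegenerate_on gamma (range T)"
  unfolding nondegenerate_on_def
proof (intro ballI impI)
  fix v assume "v \<in> range T" and h: "\<forall>u\<in>range T. gamma v u = 0"
  then obtain x where x: "v = T x" by blast
  have "(\<chi> j i. gamma (T (axis i 1)) (T (axis j 1))) *v x = 0"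
    unfolding vec_eq_iff using matrix_gamma[OF exp] h x by simp
  then have "x = 0" using det_ker[OF det] by blast
  then show "v = 0" using x T0 by simp
qed

lemma tendsto_smult:
  fixes v :: "'b \<Rightarrow> complex^'m::finite"
  assumes "(c \<longlongrightarrow> c0) F" "(v \<longlongrightarrow> v0) F"
  shows "((\<lambda>x. c x *s v x) \<longlongrightarrow> c0 *s v0) F"
  unfolding vector_scalar_mult_def by (intro tendsto_intros assms)

theorem mainTheorem7:
  fixes L :: "(complex^('n::finite + 'n)) set" and f :: "complex^('n + 'n) \<Rightarrow> complex"
    and q :: "complex^('n + 'n)"
  assumes "lagrangian_pair L f" and "kaehlerian L"
    and "q \<in> L" and "tau q = q" and "f q \<notin> \<real>"
  shows "\<exists>U. openin (top_of_set L) U \<and> q \<in> U \<and>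
           complex_lagrangian (con U f) \<and> kaehlerian (con U f)"
proof -
  note lp = assms(1)
  have cl: "complex_lagrangian L" using lp by (simp add: lagrangian_pair_def)
  then obtain W0 D0 and \<phi> :: "complex^'n \<Rightarrow> complex^('n+'n)" and \<phi>' where
    qW: "q \<in> W0" and ch: "cchart L W0 D0 \<phi> \<phi>'"
    using assms(3) unfolding complex_lagrangian_def csubmanifold_def by blast
  have isoL: "\<And>p u v. p \<in> L \<Longrightarrow> u \<in> tangent_space L p \<Longrightarrow> v \<in> tangent_space L p \<Longrightarrow> Omega u v = 0"
    using cl unfolding complex_lagrangian_def by (meson)
  have oD: "open D0" and oW: "open W0" and im: "\<phi> ` D0 = L \<inter> W0" and injD: "inj_on \<phi> D0"
    and invc: "continuous_on (L \<inter> W0) (inv_into D0 \<phi>)"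
    and der: "\<And>d. d \<in> D0 \<Longrightarrow> (\<phi> has_derivative \<phi>' d) (at d)"
    and injd: "\<And>d. d \<in> D0 \<Longrightarrow> inj (\<phi>' d)"
    using ch unfolding cchart_def by blast+
  have "q \<in> \<phi> ` D0" using assms(3) qW im by simp
  then obtain d0 where d0: "d0 \<in> D0" "\<phi> d0 = q" by (metis imageE)
  define T where "T d = Phi' f \<phi> \<phi>' (mkp 1 d)" for d
  define A where "A d = (\<chi> j i. gamma (T d (axis i 1)) (T d (axis j 1)))" for d
  have e1: "mkp 1 d \<in> Dc D0" if "d \<in> D0" for d using that by (simp add: Dc_def)
  have Tder: "(Phi f \<phi> has_derivative T d) (at (mkp 1 d))" if "d \<in> D0" for d
    unfolding T_def by (rule Phi_deriv[OF lp ch order_refl e1[OF that]])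
  have Tlin: "linear (T d)" if "d \<in> D0" for d
    using Tder[OF that] by (simp add: has_derivative_def bounded_linear.linear)
  have Texp: "T d x = (\<Sum>i\<in>UNIV. x$i *s T d (axis i 1))" if "d \<in> D0" for d x
    unfolding T_def
    by (rule Phi'_expand) (use Tlin[OF that] Phi'_hom[OF ch order_refl e1[OF that]] in \<open>auto simp: T_def\<close>)
  have T0: "T d 0 = 0" if "d \<in> D0" for d using Tlin[OF that] by (simp add: linear_0)
  have kq: "nondegenerate_on gamma (tangent_space L q)" using assms(2,3) by (simp add: kaehlerian_def)
  have tq: "tangent_space L q = range (\<phi>' d0)" using tangent_chart_eq[OF ch d0(1)] d0(2) by simp
  have Fnr: "cnj (f q) - f q \<noteq> 0" using assms(5) Reals_cnj_iff by force
  have pl0: "bounded_linear (\<phi>' d0)" using der[OF d0(1)] by (simp add: has_derivative_def)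
  have det0: "det (A d0) \<noteq> 0"
  proof (rule det_nz_of_ker)
    fix x assume Ax: "A d0 *v x = 0"
    have gj: "gamma (T d0 x) (T d0 (axis j 1)) = 0" for j
      using matrix_gamma[OF Texp[OF d0(1)], of x j] Ax by (simp add: A_def)
    have gall: "gamma (T d0 x) (T d0 y) = 0" for y
      using gamma_right_expand[OF Texp[OF d0(1)], of "T d0 x" y] gj by simp
    have form: "gamma (T d0 x) (T d0 y) =
      \<i> * (x$None * cnj (y$None) * (cnj (f q) - f q) + Omega (\<phi>' d0 (tlp x)) (tau (\<phi>' d0 (tlp y))))" for y
      unfolding T_def using Phi'_gamma_real[of \<phi> "mkp 1 d0" f \<phi>' x y] assms(4) d0(2) by simp
    have "\<phi>' d0 0 = 0" using pl0 by (simp add: linear_simps)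
    moreover have "tlp (axis None 1 :: complex^'n option) = 0" by (simp add: vec_eq_iff axis_def)
    moreover have "(axis None 1 :: complex^'n option) $ None = 1" by (simp add: axis_def)
    ultimately have "\<i> * (x$None * (cnj (f q) - f q)) = 0"
      using form[of "axis None 1"] gall[of "axis None 1"] by simp
    then have x0: "x$None = 0" using Fnr by simp
    have gz: "gamma (\<phi>' d0 (tlp x)) (\<phi>' d0 h) = 0" for h
      using form[of "mkp 0 h"] gall[of "mkp 0 h"] x0 by (simp add: gamma_def)
    have "\<forall>u\<in>tangent_space L q. gamma (\<phi>' d0 (tlp x)) u = 0" using gz tq by auto
    moreover have "\<phi>' d0 (tlp x) \<in> tangent_space L q" using tq by simp
    ultimately have "\<phi>' d0 (tlp x) = 0"
      using kq unfolding nondegenerate_on_def by blast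
    then have "\<phi>' d0 (tlp x) = \<phi>' d0 0" using \<open>\<phi>' d0 0 = 0\<close> by simp
    then have "tlp x = 0" using injd[OF d0(1)] unfolding inj_def by blast
    then have "mkp (x$None) (tlp x) = mkp 0 0" using x0 by (simp only:)
    then show "x = 0" by (simp only: mkp_eta mkp_zero)
  qed
  have phic: "(\<phi> \<longlongrightarrow> \<phi> d0) (at d0)"
    using has_derivative_continuous[OF der[OF d0(1)]] by (simp add: continuous_at)
  have fphic: "((\<lambda>d. f (\<phi> d)) \<longlongrightarrow> f (\<phi> d0)) (at d0)"
    using has_derivative_continuous[OF lp_deriv[OF lp ch d0(1)]] by (simp add: continuous_at o_def)
  have Tc: "((\<lambda>d. T d k) \<longlongrightarrow> T d0 k) (at d0)" for k
    unfolding T_def Phi'_def tlp_mkp mkp_nth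
    by (intro tendsto_mk tendsto_intros tendsto_Omega tendsto_smult phic fphic chart_deriv_cont[OF ch d0(1)])
  have detc: "((\<lambda>d. det (A d)) \<longlongrightarrow> det (A d0)) (at d0)"
    by (rule tendsto_det) (simp add: A_def tendsto_gamma Tc)
  have "eventually (\<lambda>d. det (A d) \<noteq> 0) (at d0)"
    by (rule tendsto_imp_eventually_ne[OF detc det0])
  then obtain r1 where r1: "r1 > 0" "\<And>d. d \<noteq> d0 \<Longrightarrow> dist d d0 < r1 \<Longrightarrow> det (A d) \<noteq> 0"
    unfolding eventually_at by blast
  obtain r2 where r2: "r2 > 0" "ball d0 r2 \<subseteq> D0" using oD d0(1) open_contains_ball by blast
  define B where "B = ball d0 (min r1 r2)"
  have BD: "B \<subseteq> D0" using r2 by (auto simp: B_def)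
  have oB: "open B" by (simp add: B_def)
  have detB: "det (A d) \<noteq> 0" if "d \<in> B" for d
    using that r1 det0 by (cases "d = d0") (auto simp: B_def dist_commute)
  have d0B: "d0 \<in> B" using r1 r2 by (simp add: B_def)
  define U where "U = \<phi> ` B"
  have "U = (L \<inter> W0) \<inter> inv_into D0 \<phi> -` B"
  proof
    show "U \<subseteq> (L \<inter> W0) \<inter> inv_into D0 \<phi> -` B"
      using BD im injD by (auto simp: U_def inv_into_f_f)
    show "(L \<inter> W0) \<inter> inv_into D0 \<phi> -` B \<subseteq> U"
    proof
      fix x assume x: "x \<in> (L \<inter> W0) \<inter> inv_into D0 \<phi> -` B"
      then have "x = \<phi> (inv_into D0 \<phi> x)" using im by (metis IntD1 f_inv_into_f)
      then show "x \<in> U" using x by (auto simp: U_def)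
    qed
  qed
  then have "openin (top_of_set (L \<inter> W0)) U"
    using continuous_openin_preimage_gen[OF invc oB] by simp
  moreover have "openin (top_of_set L) (L \<inter> W0)" using oW by (simp add: openin_open_Int)
  ultimately have opU: "openin (top_of_set L) U" by (rule openin_trans)
  have qU: "q \<in> U" using d0B d0(2) by (auto simp: U_def)
  have cch: "cchart (con U f) UNIV (Dc B) (Phi f \<phi>) (Phi' f \<phi> \<phi>')"
    unfolding U_def by (rule cone_chart[OF lp ch BD oB])
  have conim: "con U f = Phi f \<phi> ` Dc B" using con_eq[of f \<phi> B] by (simp add: U_def)
  have tan: "tangent_space (con U f) (Phi f \<phi> e) = range (Phi' f \<phi> \<phi>' e)" if "e \<in> Dc B" for e
    unfolding U_def by (rule cone_tangent[OF lp ch BD oB that])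
  have csub: "csubmanifold TYPE('n option) (con U f)"
    unfolding csubmanifold_def using cch by blast
  have iso: "\<forall>p\<in>con U f. \<forall>u\<in>tangent_space (con U f) p. \<forall>v\<in>tangent_space (con U f) p. Omega u v = 0"
  proof (intro ballI)
    fix p u v assume p: "p \<in> con U f" and u: "u \<in> tangent_space (con U f) p"
      and v: "v \<in> tangent_space (con U f) p"
    from p conim obtain e where e: "e \<in> Dc B" "p = Phi f \<phi> e" by blast
    have dD: "tlp e \<in> D0" using e BD by (auto simp: Dc_def)
    from u v obtain k l where k: "u = Phi' f \<phi> \<phi>' e k" and l: "v = Phi' f \<phi> \<phi>' e l"
      using tan[OF e(1)] e(2) by auto
    have "\<phi> (tlp e) \<in> L" using dD im by blast
    moreover have "\<phi>' (tlp e) (tlp k) \<in> tangent_space L (\<phi> (tlp e))"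
      "\<phi>' (tlp e) (tlp l) \<in> tangent_space L (\<phi> (tlp e))"
      using tangent_chart_sup[OF ch dD] by auto
    ultimately have "Omega (\<phi>' (tlp e) (tlp k)) (\<phi>' (tlp e) (tlp l)) = 0" using isoL by blast
    then show "Omega u v = 0" unfolding k l by (rule Phi'_iso)
  qed
  have kae: "kaehlerian (con U f)"
    unfolding kaehlerian_def
  proof
    fix p assume p: "p \<in> con U f"
    from p conim obtain e where e: "e \<in> Dc B" "p = Phi f \<phi> e" by blast
    have dB: "tlp e \<in> B" using e by (auto simp: Dc_def)
    have dD: "tlp e \<in> D0" using dB BD by auto
    have "tangent_space (con U f) p = range (T (tlp e))"
      using tan[OF e(1)] e(2) range_Phi'_normalize[OF ch BD e(1)] by (simp add: T_def)
    moreover have "nondegenerate_on gamma (range (T (tlp e)))"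
      by (rule nondeg_from_det[OF Texp[OF dD] T0[OF dD]]) (use detB[OF dB] in \<open>simp add: A_def\<close>)
    ultimately show "nondegenerate_on gamma (tangent_space (con U f) p)" by simp
  qed
  show ?thesis
    using opU qU csub iso kae unfolding complex_lagrangian_def by blast
qed

end
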